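(* Let $\mathcal F_0:=\{f\in L^2(0,1):|f|<1\text{ a.e.}\}$ and, with $\mathrm{id}(y)=y$ on $(0,1)$, $\hat J(f):=\|f-\mathrm{id}\|_{L^2(0,1)}^2-\frac34\langle f-\mathrm{id},f+\mathrm{id}\rangle_{L^2(0,1)}^2$. Then $\hat J(f)>0$ for all $f\in\mathcal F_0\setminus\{\mathrm{id}\}$. *)

theory Defs
  imports "HOL-Analysis.Analysis"
begin

definition L2_inner01 :: "(real \<Rightarrow> real) \<Rightarrow> (real \<Rightarrow> real) \<Rightarrow> real" where
  "L2_inner01 f g = (LINT x:{0<..<1}|lborel. f x * g x)"

definition L2_normsq01 :: "(real \<Rightarrow> real) \<Rightarrow> real" where
  "L2_normsq01 f = L2_inner01 f f"

definition F0 :: "(real \<Rightarrow> real) set" where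
  "F0 = {f. set_borel_measurable lborel {0<..<1} f
           \<and> set_integrable lborel {0<..<1} (\<lambda>x. (f x)^2)
           \<and> (AE x in lborel. x \<in> {0<..<1} \<longrightarrow> \<bar>f x\<bar> < 1)}"

definition Jhat :: "(real \<Rightarrow> real) \<Rightarrow> real" where
  "Jhat f = L2_normsq01 (\<lambda>y. f y - y)
            - 3/4 * (L2_inner01 (\<lambda>y. f y - y) (\<lambda>y. f y + y))^2"

end

theory Submission
  imports Defs
begin

lemma ftc_open:
  fixes F f :: "real \<Rightarrow> real" and a b :: real
  assumes "a \<le> b" "continuous_on {a..b} f"
    "\<And>x. a \<le> x \<Longrightarrow> x \<le> b \<Longrightarrow> (F has_real_derivative f x) (at x)"
  shows "(LINT x:{a<..<b}|lborel. f x) = F b - F a"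
proof -
  have "(LINT x:{a<..<b}|lborel. f x) = (LBINT x=a..b. f x)"
    using assms(1) by (simp add: interval_lebesgue_integral_def)
  also have "\<dots> = F b - F a"
    apply (rule interval_integral_FTC_finite)
    using assms by (auto simp: min_def max_def has_real_derivative_iff_has_vector_derivative[symmetric]
        intro: has_field_derivative_at_within)
  finally show ?thesis .
qed

lemma int_1: "(LINT x:{0<..<1::real}|lborel. 1) = (1::real)"
  using ftc_open[of 0 1 "\<lambda>x. 1" "\<lambda>x. x"] by (auto intro!: derivative_eq_intros)
lemma int_x: "(LINT x:{0<..<1::real}|lborel. x) = (1/2::real)"
proof -
  have "(LINT x:{0<..<1::real}|lborel. x) = 1^2/2 - 0^2/2"
    by (rule ftc_open) (auto intro!: derivative_eq_intros continuous_intros)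
  then show ?thesis by simp
qed
lemma int_x2: "(LINT x:{0<..<1::real}|lborel. x^2) = (1/3::real)"
proof -
  have "(LINT x:{0<..<1::real}|lborel. x^2) = 1^3/3 - 0^3/3"
    by (rule ftc_open) (auto intro!: derivative_eq_intros continuous_intros simp: power2_eq_square)
  then show ?thesis by simp
qed

lemma int_max:
  fixes c :: real assumes "0 < c" "c < 1"
  shows "(LINT x:{0<..<1}|lborel. (max (x - c) 0)^2) = (1-c)^3/3"
proof -
  have "(LINT x:{0<..<1}|lborel. (max (x - c) 0)^2) = (LINT x:{c<..<1}|lborel. (x - c)^2)"
    unfolding set_lebesgue_integral_def
    by (rule Bochner_Integration.integral_cong) (use assms in \<open>auto simp: indicator_def\<close>)
  also have "\<dots> = (1-c)^3/3 - (c-c)^3/3"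
    by (rule ftc_open) (use assms in \<open>auto intro!: derivative_eq_intros continuous_intros simp: power2_eq_square\<close>)
  finally show ?thesis by simp
qed

lemma sbm:
  fixes P :: "real \<Rightarrow> real \<Rightarrow> real" and f :: "real \<Rightarrow> real"
  assumes f: "set_borel_measurable lborel S f" and S: "S \<in> sets borel"
    and P: "(\<lambda>p. P (fst p) (snd p)) \<in> borel_measurable borel"
  shows "set_borel_measurable lborel S (\<lambda>x. P x (f x))"
proof -
  have fm: "(\<lambda>x. indicator S x * f x) \<in> borel_measurable lborel"
    using f unfolding set_borel_measurable_def by simp
  have "(\<lambda>x. P (fst (x, indicator S x * f x)) (snd (x, indicator S x * f x))) \<in> borel_measurable lborel"
    using measurable_compose[OF _ P, of "\<lambda>x. (x, indicator S x * f x)" lborel] fm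
    by (simp add: measurable_Pair borel_prod[symmetric])
  then have "(\<lambda>x. indicator S x * P x (indicator S x * f x)) \<in> borel_measurable lborel"
    using S by simp
  moreover have "(\<lambda>x. indicator S x * P x (indicator S x * f x)) = (\<lambda>x. indicator S x * P x (f x))"
    by (auto simp: indicator_def)
  ultimately show ?thesis unfolding set_borel_measurable_def by simp
qed

lemma sib:
  fixes h :: "real \<Rightarrow> real"
  assumes "set_borel_measurable lborel {0<..<1} h"
    and "AE x in lborel. x \<in> {0<..<1} \<longrightarrow> \<bar>h x\<bar> \<le> B"
  shows "set_integrable lborel {0<..<1} h"
  unfolding set_integrable_def
  apply (rule integrableI_bounded_set[where B=B and A="{0<..<1}"])
  using assms(1) apply (auto simp: set_borel_measurable_def)[3]
  using assms(2) by (auto elim!: eventually_mono simp: indicator_def)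

lemma pos_int:
  fixes h :: "real \<Rightarrow> real"
  assumes hi: "set_integrable lborel S h" and S: "S \<in> sets borel"
    and nn: "AE x in lborel. x \<in> S \<longrightarrow> h x \<ge> 0"
    and ps: "AE x in lborel. x \<in> T \<longrightarrow> h x > 0"
    and TS: "T \<subseteq> S" and T: "T \<in> sets borel" and Tm: "emeasure lborel T > 0"
  shows "(LINT x:S|lborel. h x) > 0"
proof -
  have i: "integrable lborel (\<lambda>x. indicator S x * h x)"
    using hi unfolding set_integrable_def by simp
  have n2: "AE x in lborel. 0 \<le> indicator S x * h x"
    using nn by eventually_elim (auto simp: indicator_def)
  have ge: "(LINT x:S|lborel. h x) \<ge> 0"
    unfolding set_lebesgue_integral_def using integral_nonneg_AE[OF n2] by simp
  show ?thesis
  proof (rule ccontr)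
    assume "\<not> ?thesis"
    with ge have "(LINT x|lborel. indicator S x * h x) = 0"
      unfolding set_lebesgue_integral_def by simp
    then have "AE x in lborel. indicator S x * h x = 0"
      using integral_nonneg_eq_0_iff_AE[OF i n2] by simp
    with ps have "AE x in lborel. x \<notin> T"
      by eventually_elim (use TS in \<open>auto simp: indicator_def\<close>)
    then have "emeasure lborel T = 0"
      using AE_iff_measurable[of T lborel "\<lambda>x. x \<notin> T"] T by auto
    with Tm show False by simp
  qed
qed

lemma pw1:
  fixes c x y :: real
  assumes "0 < c" "0 < x" "\<bar>y\<bar> < 1"
  shows "c*y^2 - 2*(x*y) + x^2/c - (max (x - c) 0)^2/c \<ge> 0"
    and "x > c \<Longrightarrow> c*y^2 - 2*(x*y) + x^2/c - (max (x - c) 0)^2/c > 0"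
proof -
  have A: "x \<le> c \<Longrightarrow> c*y^2 - 2*(x*y) + x^2/c - (max (x - c) 0)^2/c = (c*y - x)^2/c"
    using assms by (simp add: max_def field_simps power2_eq_square)
  have B: "x > c \<Longrightarrow> c*y^2 - 2*(x*y) + x^2/c - (max (x - c) 0)^2/c = (1-y)*(2*x - c*(1+y))"
    using assms by (simp add: max_def field_simps power2_eq_square)
  have C: "x > c \<Longrightarrow> (1-y)*(2*x - c*(1+y)) > 0"
  proof -
    assume "x > c"
    moreover have "c*(1+y) < c * 2" using assms by (intro mult_strict_left_mono) auto
    ultimately have "c*(1+y) < 2*x" by linarith
    then show ?thesis using assms by (intro mult_pos_pos) auto
  qed
  show "c*y^2 - 2*(x*y) + x^2/c - (max (x - c) 0)^2/c \<ge> 0"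
    using A B C assms by (cases "x \<le> c") (auto intro: divide_nonneg_pos less_imp_le)
  show "x > c \<Longrightarrow> c*y^2 - 2*(x*y) + x^2/c - (max (x - c) 0)^2/c > 0"
    using B C by simp
qed

lemma alg1:
  fixes a b c :: real
  assumes "c = 3/2 - 3*a/2" "c > 0"
  shows "a - 2*b + 1/3 - 3/4*(a - 1/3)^2 = c*a - 2*b + 1/(3*c) - (1-c)^3/(3*c)"
proof -
  have a: "a = 1 - 2*c/3" using assms(1) by linarith
  show ?thesis unfolding a using assms(2) by (simp add: field_simps power2_eq_square power3_eq_cube)
qed

lemma alg2:
  fixes a b c :: real
  assumes "c = 3/2 - 3*a/2" "a < 1/3" "c*a - 2*b + 1/(3*c) \<ge> 0"
  shows "a - 2*b + 1/3 - 3/4*(a - 1/3)^2 > 0"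
proof -
  have c: "c > 1" using assms by simp
  have a: "a = 1 - 2*c/3" using assms(1) by linarith
  have "a - 2*b + 1/3 - 3/4*(a - 1/3)^2 = (c*a - 2*b + 1/(3*c)) + (1/3 - a)^3*27/8/(3*c)"
    unfolding a using c by (simp add: field_simps power2_eq_square power3_eq_cube)
  moreover have "(1/3 - a)^3*27/8/(3*c) > 0" using assms c by simp
  ultimately show ?thesis using assms by linarith
qed

lemma sq4:
  fixes x y :: real
  assumes "0 < x" "x < 1" "\<bar>y\<bar> < 1"
  shows "(y - x)^2 \<le> 4"
proof -
  have a: "\<bar>y - x\<bar> \<le> 2" using assms by auto
  have "(y - x)^2 = \<bar>y - x\<bar>^2" by simp
  also have "\<dots> \<le> 2^2" by (rule power_mono[OF a]) simp
  finally show ?thesis by simp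
qed

theorem lemma4p4:
  fixes f :: "real \<Rightarrow> real"
  assumes "f \<in> F0"
    and "\<not> (AE x in lborel. x \<in> {0<..<1} \<longrightarrow> f x = x)"
  shows "Jhat f > 0"
proof -
  define S :: "real set" where "S = {0<..<1}"
  have Sb: "S \<in> sets borel" unfolding S_def by simp
  have fm: "set_borel_measurable lborel S f" and f2i: "set_integrable lborel S (\<lambda>x. (f x)^2)"
    and bnd: "AE x in lborel. x \<in> S \<longrightarrow> \<bar>f x\<bar> < 1"
    using assms(1) unfolding F0_def S_def by auto
  have meas: "set_borel_measurable lborel S (\<lambda>x. P x (f x))"
    if "(\<lambda>p. P (fst p) (snd p)) \<in> borel_measurable borel" for P :: "real \<Rightarrow> real \<Rightarrow> real"
    by (rule sbm[OF fm Sb that])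
  have int: "set_integrable lborel S (\<lambda>x. P x (f x))"
    if "continuous_on UNIV (\<lambda>p. P (fst p) (snd p))"
       "\<And>x y. 0 < x \<Longrightarrow> x < 1 \<Longrightarrow> \<bar>y\<bar> < 1 \<Longrightarrow> \<bar>P x y\<bar> \<le> B"
    for P :: "real \<Rightarrow> real \<Rightarrow> real" and B
    unfolding S_def
    apply (rule sib[where B=B])
    using meas[OF borel_measurable_continuous_onI[OF that(1)]] apply (simp add: S_def)
    using bnd by eventually_elim (auto simp: S_def intro: that(2))
  have ixf: "set_integrable lborel S (\<lambda>x. x * f x)"
    by (rule int[where P="\<lambda>x y. x * y" and B=1]) (auto simp: abs_mult intro: mult_le_one intro!: continuous_intros)
  have ix2: "set_integrable lborel S (\<lambda>x. x^2)"
    by (rule int[where P="\<lambda>x y. x^2" and B=1]) (auto simp: abs_mult power2_eq_square intro: mult_le_one intro!: continuous_intros)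
  define a where "a = (LINT x:S|lborel. (f x)^2)"
  define b where "b = (LINT x:S|lborel. x * f x)"
  have Ix2: "(LINT x:S|lborel. x^2) = 1/3" using int_x2 by (simp add: S_def)
  have D: "L2_normsq01 (\<lambda>y. f y - y) = a - 2*b + 1/3"
  proof -
    have "L2_normsq01 (\<lambda>y. f y - y) = (LINT x:S|lborel. ((f x)^2 - 2 * (x * f x)) + x^2)"
      unfolding L2_normsq01_def L2_inner01_def S_def
      by (rule arg_cong[where f="set_lebesgue_integral lborel _"]) (auto simp: power2_eq_square algebra_simps)
    also have "\<dots> = a - 2*b + 1/3"
      using f2i ixf ix2 Ix2 by (simp add: a_def b_def set_integrable_mult_right)
    finally show ?thesis .
  qed
  have Inn: "L2_inner01 (\<lambda>y. f y - y) (\<lambda>y. f y + y) = a - 1/3"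
  proof -
    have "L2_inner01 (\<lambda>y. f y - y) (\<lambda>y. f y + y) = (LINT x:S|lborel. (f x)^2 - x^2)"
      unfolding L2_inner01_def S_def
      by (rule arg_cong[where f="set_lebesgue_integral lborel _"]) (auto simp: power2_eq_square algebra_simps)
    also have "\<dots> = a - 1/3"
      using f2i ix2 Ix2 by (simp add: a_def)
    finally show ?thesis .
  qed
  have J: "Jhat f = a - 2*b + 1/3 - 3/4*(a - 1/3)^2"
    unfolding Jhat_def D Inn ..
  have i1: "set_integrable lborel S (\<lambda>x. 1::real)"
    unfolding set_integrable_def S_def by simp
  have I1: "(LINT x:S|lborel. (1::real)) = 1" using int_1 by (simp add: S_def)
  have Dpos: "a - 2*b + 1/3 > 0"
  proof -
    have idd: "set_integrable lborel S (\<lambda>x. (f x - x)^2)"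
      by (rule int[where P="\<lambda>x y. (y - x)^2" and B=4])
        (auto intro!: continuous_intros sq4)
    have eq: "(LINT x:S|lborel. (f x - x)^2) = a - 2*b + 1/3"
    proof -
      have "(LINT x:S|lborel. (f x - x)^2) = (LINT x:S|lborel. ((f x)^2 - 2 * (x * f x)) + x^2)"
        by (rule arg_cong[where f="set_lebesgue_integral lborel _"]) (auto simp: power2_eq_square algebra_simps)
      also have "\<dots> = a - 2*b + 1/3"
        using f2i ixf ix2 Ix2 by (simp add: a_def b_def set_integrable_mult_right)
      finally show ?thesis .
    qed
    have ii: "integrable lborel (\<lambda>x. indicator S x * (f x - x)^2)"
      using idd unfolding set_integrable_def by simp
    have nn: "AE x in lborel. 0 \<le> indicator S x * (f x - x)^2" by simp
    have ge: "(LINT x:S|lborel. (f x - x)^2) \<ge> 0"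
      unfolding set_lebesgue_integral_def using integral_nonneg_AE[OF nn] by simp
    have "(LINT x:S|lborel. (f x - x)^2) \<noteq> 0"
    proof
      assume "(LINT x:S|lborel. (f x - x)^2) = 0"
      then have "AE x in lborel. indicator S x * (f x - x)^2 = 0"
        using integral_nonneg_eq_0_iff_AE[OF ii nn] unfolding set_lebesgue_integral_def by simp
      then have "AE x in lborel. x \<in> {0<..<1} \<longrightarrow> f x = x"
        by eventually_elim (auto simp: S_def indicator_def)
      with assms(2) show False by simp
    qed
    with ge eq show ?thesis by simp
  qed
  have alt1: "a < 1"
  proof -
    have ih: "set_integrable lborel S (\<lambda>x. 1 - (f x)^2)" using i1 f2i by simp
    have "(LINT x:S|lborel. 1 - (f x)^2) > 0"
    proof (rule pos_int[OF ih Sb _ _ order_refl Sb])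
      show "AE x in lborel. x \<in> S \<longrightarrow> 0 \<le> 1 - (f x)^2"
        using bnd by eventually_elim (auto simp: abs_square_le_1)
      show "AE x in lborel. x \<in> S \<longrightarrow> 0 < 1 - (f x)^2"
        using bnd by eventually_elim (auto simp: abs_square_less_1)
      show "emeasure lborel S > 0" by (simp add: S_def)
    qed
    moreover have "(LINT x:S|lborel. 1 - (f x)^2) = 1 - a"
      using i1 f2i I1 by (simp add: a_def)
    ultimately show ?thesis by simp
  qed
  define c where "c = 3/2 - 3*a/2"
  consider "a < 1/3" | "a = 1/3" | "a > 1/3" by linarith
  then show ?thesis
  proof cases
    case 1
    then have c1: "c > 1" by (simp add: c_def)
    have ig: "set_integrable lborel S (\<lambda>x. c * (f x)^2 - 2 * (x * f x) + (1/c) * x^2)"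
      using f2i ixf ix2 by simp
    have "(LINT x:S|lborel. c * (f x)^2 - 2 * (x * f x) + (1/c) * x^2) \<ge> (LINT x:S|lborel. 0)"
    proof (rule set_integral_mono[OF _ ig])
      show "set_integrable lborel S (\<lambda>x. 0::real)" by (simp add: set_integrable_def)
      fix x assume "x \<in> S"
      have "c * (f x)^2 - 2 * (x * f x) + (1/c) * x^2 = (c * f x - x)^2 / c"
        using c1 by (simp add: field_simps power2_eq_square)
      also have "\<dots> \<ge> 0" using c1 by simp
      finally show "0 \<le> c * (f x)^2 - 2 * (x * f x) + (1/c) * x^2" .
    qed
    moreover have "(LINT x:S|lborel. c * (f x)^2 - 2 * (x * f x) + (1/c) * x^2) = c*a - 2*b + 1/(3*c)"
      using f2i ixf ix2 by (simp add: a_def b_def Ix2)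
    ultimately have "c*a - 2*b + 1/(3*c) \<ge> 0" by simp
    then show ?thesis unfolding J using alg2[OF c_def 1] by simp
  next
    case 2
    have "(a - 1/3)^2 = 0" using 2 by simp
    then show ?thesis unfolding J using Dpos by linarith
  next
    case 3
    then have c0: "0 < c" "c < 1" using alt1 by (auto simp: c_def)
    have im: "set_integrable lborel S (\<lambda>x. (max (x - c) 0)^2)"
      apply (rule int[where P="\<lambda>x y. (max (x - c) 0)^2" and B=1])
       apply (intro continuous_intros)
      using c0 by (auto simp: abs_square_le_1 max_def)
    have Im: "(LINT x:S|lborel. (max (x - c) 0)^2) = (1-c)^3/3"
      using int_max[OF c0] by (simp add: S_def)
    have ig: "set_integrable lborel S (\<lambda>x. c * (f x)^2 - 2 * (x * f x) + (1/c) * x^2 - (1/c) * (max (x - c) 0)^2)"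
      using f2i ixf ix2 im by simp
    have pw: "c * y^2 - 2 * (x * y) + (1/c) * x^2 - (1/c) * (max (x - c) 0)^2
        = c*y^2 - 2*(x*y) + x^2/c - (max (x - c) 0)^2/c" for x y by simp
    have "(LINT x:S|lborel. c * (f x)^2 - 2 * (x * f x) + (1/c) * x^2 - (1/c) * (max (x - c) 0)^2) > 0"
    proof (rule pos_int[OF ig Sb])
      show "AE x in lborel. x \<in> S \<longrightarrow> 0 \<le> c * (f x)^2 - 2 * (x * f x) + (1/c) * x^2 - (1/c) * (max (x - c) 0)^2"
        using bnd
      proof eventually_elim
        case (elim x)
        show ?case
        proof
          assume x: "x \<in> S"
          then have "0 \<le> c*(f x)^2 - 2*(x*f x) + x^2/c - (max (x - c) 0)^2/c"
            using elim by (intro pw1(1)[OF c0(1)]) (auto simp: S_def)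
          then show "0 \<le> c * (f x)^2 - 2 * (x * f x) + (1/c) * x^2 - (1/c) * (max (x - c) 0)^2"
            by (simp only: pw)
        qed
      qed
      show "AE x in lborel. x \<in> {c<..<1} \<longrightarrow> 0 < c * (f x)^2 - 2 * (x * f x) + (1/c) * x^2 - (1/c) * (max (x - c) 0)^2"
        using bnd
      proof eventually_elim
        case (elim x)
        show ?case
        proof
          assume x: "x \<in> {c<..<1}"
          then have "0 < c*(f x)^2 - 2*(x*f x) + x^2/c - (max (x - c) 0)^2/c"
            using elim c0 by (intro pw1(2)[OF c0(1)]) (auto simp: S_def)
          then show "0 < c * (f x)^2 - 2 * (x * f x) + (1/c) * x^2 - (1/c) * (max (x - c) 0)^2"
            by (simp only: pw)
        qed
      qed
      show "{c<..<1} \<subseteq> S" using c0 by (auto simp: S_def)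
      show "{c<..<1} \<in> sets borel" by simp
      show "emeasure lborel {c<..<1} > 0" using c0 by simp
    qed
    moreover have "(LINT x:S|lborel. c * (f x)^2 - 2 * (x * f x) + (1/c) * x^2 - (1/c) * (max (x - c) 0)^2)
        = c*a - 2*b + 1/(3*c) - (1-c)^3/(3*c)"
      using f2i ixf ix2 im by (simp add: a_def b_def Ix2 Im)
    ultimately show ?thesis unfolding J alg1[OF c_def c0(1)] by simp
  qed
qed

end
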